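(* Let $K$ be a field, let $\Lambda$ be the Grassmann algebra over $K$ on odd generators $x_0,x_1,x_2,\dots$, identify $x_i$ with the odd operator of left multiplication by $x_i$ on $\Lambda$, and let $\partial_i$ be the odd superderivation of $\Lambda$ with $\partial_i(x_j)=\delta_{ij}$. For $i\ge 0$ let $$v_i=\sum_{k\ge 0}\Big(\prod_{n=0}^{k-1}x_{i+3n}x_{i+3n+1}\Big)\partial_{i+3k}=\partial_i+x_ix_{i+1}\big(\partial_{i+3}+x_{i+3}x_{i+4}(\partial_{i+6}+\cdots)\big).$$ Then, for all $i,k\ge 0$, with $[a,b]=ab-(-1)^{|a||b|}ba$ the supercommutator in $\operatorname{End}\Lambda$, $$[v_i,v_{i+3k}]=2\Big(\prod_{n=0}^{k-1}x_{i+3n}x_{i+3n+1}\Big)x_{i+3k+1}v_{i+3k+3},$$ $$[v_i,v_{i+3k+1}]=-\Big(\prod_{n=0}^{k-1}x_{i+3n}x_{i+3n+1}\Big)x_{i+3k}v_{i+3k+3},$$ $$[v_i,v_{i+3k+2}]=-\Big(\prod_{n=0}^{k}x_{i+3n}x_{i+3n+1}\Big)x_{i+3k+2}v_{i+3k+5}.$$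
   Context: The $v_i$ are odd superderivations of $\Lambda$ given by formal infinite sums; applied to any element of $\Lambda$ only finitely many terms act nontrivially, so they are well-defined elements of $\operatorname{End}\Lambda$. All products of operators are compositions in $\operatorname{End}\Lambda$; $x_i,\partial_i$ are odd, with $\partial_ix_j+x_j\partial_i=\delta_{ij}$, $x_i^2=\partial_i^2=0$, and other pairs anticommuting. *)

theory Defs
  imports Main
begin

text \<open>Grassmann algebra over a field on odd generators x_0, x_1, ...:
  an element is a finitely supported coefficient function on finite sets of
  indices; the set S stands for the monomial x_{s1} x_{s2} ... x_{sm} with
  s1 < s2 < ... < sm.\<close>

definition grass :: "(nat set \<Rightarrow> 'a::field) set" where
  "grass = {f. finite {S. f S \<noteq> 0} \<and> (\<forall>S. f S \<noteq> 0 \<longrightarrow> finite S)}"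

text \<open>Sign of reordering the monomial of A followed by the monomial of B.\<close>
definition gsign :: "nat set \<Rightarrow> nat set \<Rightarrow> 'a::field" where
  "gsign A B = (-1) ^ card {(a, b). a \<in> A \<and> b \<in> B \<and> b < a}"

definition gmult :: "(nat set \<Rightarrow> 'a::field) \<Rightarrow> (nat set \<Rightarrow> 'a) \<Rightarrow> nat set \<Rightarrow> 'a" where
  "gmult f g = (\<lambda>S. \<Sum>A\<in>Pow S. gsign A (S - A) * f A * g (S - A))"

definition gen :: "nat \<Rightarrow> nat set \<Rightarrow> 'a::field" where
  "gen j = (\<lambda>S. if S = {j} then 1 else 0)"

definition xop :: "nat \<Rightarrow> (nat set \<Rightarrow> 'a::field) \<Rightarrow> nat set \<Rightarrow> 'a" where
  "xop j f = gmult (gen j) f"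

text \<open>The odd superderivation d_j with d_j(x_i) = delta_ij, written out on
  monomials: d_j (x_T) = (-1)^(number of t in T below j) x_(T - {j}) if j in T,
  and 0 otherwise.\<close>
definition dop :: "nat \<Rightarrow> (nat set \<Rightarrow> 'a::field) \<Rightarrow> nat set \<Rightarrow> 'a" where
  "dop j f = (\<lambda>S. if j \<in> S then 0
                   else (-1) ^ card {t \<in> S. t < j} * f (insert j S))"

fun pprod :: "nat \<Rightarrow> nat \<Rightarrow> (nat set \<Rightarrow> 'a::field) \<Rightarrow> nat set \<Rightarrow> 'a" where
  "pprod i 0 = id"
| "pprod i (Suc k) = pprod i k \<circ> xop (i + 3 * k) \<circ> xop (i + 3 * k + 1)"

definition vars :: "(nat set \<Rightarrow> 'a::zero) \<Rightarrow> nat set" where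
  "vars f = \<Union>{S. f S \<noteq> 0}"

text \<open>v_i = sum_{k>=0} (prod_{n<k} x_{i+3n} x_{i+3n+1}) d_{i+3k}; applied to f only
  the terms with i+3k among the variables of f can be nonzero (d_j f = 0 otherwise),
  so the formal infinite sum is the finite sum over those k.\<close>
definition vop :: "nat \<Rightarrow> (nat set \<Rightarrow> 'a::field) \<Rightarrow> nat set \<Rightarrow> 'a" where
  "vop i f = (\<lambda>S. \<Sum>k\<in>{k. i + 3 * k \<in> vars f}. pprod i k (dop (i + 3 * k) f) S)"

definition scomm :: "nat \<Rightarrow> nat \<Rightarrow> ((nat set \<Rightarrow> 'a::field) \<Rightarrow> nat set \<Rightarrow> 'a)
     \<Rightarrow> ((nat set \<Rightarrow> 'a) \<Rightarrow> nat set \<Rightarrow> 'a) \<Rightarrow> (nat set \<Rightarrow> 'a) \<Rightarrow> nat set \<Rightarrow> 'a" where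
  "scomm pa pb A B = (\<lambda>f S. A (B f) S - (-1) ^ (pa * pb) * B (A f) S)"

end

theory Submission imports Defs "HOL-Library.Function_Algebras" begin

definition sg :: "nat set \<Rightarrow> nat \<Rightarrow> 'a::field" where
  "sg S j = (-1) ^ card {t \<in> S. t < j}"
definition Xo :: "nat \<Rightarrow> (nat set \<Rightarrow> 'a::field) \<Rightarrow> nat set \<Rightarrow> 'a" where
  "Xo j g = (\<lambda>S. if j \<in> S then sg S j * g (S - {j}) else 0)"
definition Do :: "nat \<Rightarrow> (nat set \<Rightarrow> 'a::field) \<Rightarrow> nat set \<Rightarrow> 'a" where
  "Do j g = (\<lambda>S. if j \<in> S then 0 else sg S j * g (insert j S))"

lemma dop_Do: "dop = Do"
  by (simp add: fun_eq_iff dop_def Do_def sg_def)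

lemma sg_insert: "sg (insert a S) b = (if a < b \<and> a \<notin> S then - sg S b else (sg S b :: 'a::field))"
proof -
  have fin: "finite {t \<in> S. t < b}" by simp
  show ?thesis
  proof (cases "a < b \<and> a \<notin> S")
    case True
    then have "{t \<in> insert a S. t < b} = insert a {t \<in> S. t < b}" by auto
    then show ?thesis using True fin by (simp add: sg_def)
  next
    case False
    then have "{t \<in> insert a S. t < b} = {t \<in> S. t < b}" by auto
    then have "sg (insert a S) b = (sg S b :: 'a)" by (simp add: sg_def)
    then show ?thesis using False by presburger
  qed
qed

lemma sg_remove: "sg (S - {a}) b = (if a < b \<and> a \<in> S then - sg S b else (sg S b :: 'a::field))"
proof (cases "a < b \<and> a \<in> S")
  case True
  then have e: "insert a (S - {a}) = S" by auto
  have "sg (insert a (S - {a})) b = - sg (S - {a}) b" using True sg_insert[of a "S - {a}" b] by simp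
  then show ?thesis using True e by (metis minus_minus)
next
  case False
  then have "{t \<in> S - {a}. t < b} = {t \<in> S. t < b}" by auto
  then have "sg (S - {a}) b = (sg S b :: 'a)" by (simp add: sg_def)
  then show ?thesis using False by presburger
qed

lemma sg_sq: "sg S j * sg S j = (1::'a::field)"
  by (simp add: sg_def power_mult_distrib[symmetric])

lemma Xo_add[simp]: "Xo j (g + h) = Xo j g + Xo j h"
  by (auto simp: fun_eq_iff Xo_def algebra_simps)
lemma Xo_minus[simp]: "Xo j (- g) = - Xo j g"
  by (auto simp: fun_eq_iff Xo_def)
lemma Xo_diff[simp]: "Xo j (g - h) = Xo j g - Xo j h"
  by (auto simp: fun_eq_iff Xo_def algebra_simps)
lemma Xo_zero[simp]: "Xo j 0 = 0"
  by (auto simp: fun_eq_iff Xo_def)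
lemma Do_add[simp]: "Do j (g + h) = Do j g + Do j h"
  by (auto simp: fun_eq_iff Do_def algebra_simps)
lemma Do_minus[simp]: "Do j (- g) = - Do j g"
  by (auto simp: fun_eq_iff Do_def)
lemma Do_diff[simp]: "Do j (g - h) = Do j g - Do j h"
  by (auto simp: fun_eq_iff Do_def algebra_simps)
lemma Do_zero[simp]: "Do j 0 = 0"
  by (auto simp: fun_eq_iff Do_def)

lemma XX_same[simp]: "Xo a (Xo a g) = 0"
  by (auto simp: fun_eq_iff Xo_def)
lemma DD_same[simp]: "Do a (Do a g) = 0"
  by (auto simp: fun_eq_iff Do_def)

lemma XX_swap: "b < a \<Longrightarrow> Xo a (Xo b g) = - Xo b (Xo a g)"
  by (auto simp: fun_eq_iff Xo_def sg_remove Diff_insert2[symmetric] insert_commute)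

lemma DD_swap: "b < a \<Longrightarrow> Do a (Do b g) = - Do b (Do a g)"
  by (auto simp: fun_eq_iff Do_def sg_insert insert_commute)

lemma DX_swap: "a \<noteq> b \<Longrightarrow> Do a (Xo b g) = - Xo b (Do a g)"
  by (auto simp: fun_eq_iff Do_def Xo_def sg_insert sg_remove insert_Diff_if)

lemma DX_same: "Do a (Xo a g) = g - Xo a (Do a g)"
  by (auto simp: fun_eq_iff Do_def Xo_def sg_insert sg_remove insert_absorb sg_sq)

lemma Xo_sum: "Xo j (\<lambda>S. \<Sum>k\<in>K. h k S) = (\<lambda>S. \<Sum>k\<in>K. Xo j (h k) S)"
  by (auto simp: fun_eq_iff Xo_def sum_distrib_left)

fun PX :: "nat \<Rightarrow> nat \<Rightarrow> (nat set \<Rightarrow> 'a::field) \<Rightarrow> nat set \<Rightarrow> 'a" where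
  "PX i 0 = id"
| "PX i (Suc k) = PX i k \<circ> Xo (i + 3 * k) \<circ> Xo (i + 3 * k + 1)"

lemma PX_add[simp]: "PX i k (g + h) = PX i k g + PX i k h"
  by (induction k arbitrary: g h) auto
lemma PX_minus[simp]: "PX i k (- g) = - PX i k g"
  by (induction k arbitrary: g) auto
lemma PX_diff[simp]: "PX i k (g - h) = PX i k g - PX i k h"
  by (induction k arbitrary: g h) auto
lemma PX_zero[simp]: "PX i k 0 = 0"
proof (induction k)
  case (Suc k)
  show ?case apply (simp only: PX.simps comp_apply Xo_zero Suc) done
qed simp
lemma PX_sum: "PX i k (\<lambda>S. \<Sum>m\<in>K. h m S) = (\<lambda>S. \<Sum>m\<in>K. PX i k (h m) S)"
  by (induction k arbitrary: h) (auto simp: Xo_sum)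

lemma PX_Suc': "PX i (Suc k) g = Xo i (Xo (i + 1) (PX (i + 3) k g))"
proof (induction k arbitrary: g)
  case 0 then show ?case by simp
next
  case (Suc k)
  have "PX i (Suc (Suc k)) g = PX i (Suc k) (Xo (i + 3 * Suc k) (Xo (i + 3 * Suc k + 1) g))"
    by simp
  also have "\<dots> = Xo i (Xo (i + 1) (PX (i + 3) k (Xo (i + 3 * Suc k) (Xo (i + 3 * Suc k + 1) g))))"
    by (rule Suc)
  also have "\<dots> = Xo i (Xo (i + 1) (PX (i + 3) (Suc k) g))"
    by (simp add: algebra_simps)
  finally show ?case .
qed

definition Wo :: "nat \<Rightarrow> nat \<Rightarrow> (nat set \<Rightarrow> 'a::field) \<Rightarrow> nat set \<Rightarrow> 'a" where
  "Wo T i g = (\<lambda>S. \<Sum>k\<in>{k. i + 3 * k < T}. PX i k (Do (i + 3 * k) g) S)"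

lemma Wo_add[simp]: "Wo T i (g + h) = Wo T i g + Wo T i h"
  by (simp add: Wo_def fun_eq_iff sum.distrib)
lemma Wo_minus[simp]: "Wo T i (- g) = - Wo T i g"
  by (simp add: Wo_def fun_eq_iff sum_negf)
lemma Wo_diff[simp]: "Wo T i (g - h) = Wo T i g - Wo T i h"
  by (simp add: Wo_def fun_eq_iff sum_subtractf)
lemma Wo_zero[simp]: "Wo T i 0 = 0"
  by (simp add: Wo_def fun_eq_iff)

lemma Wo_high: "T \<le> i \<Longrightarrow> Wo T i g = 0"
  by (simp add: Wo_def fun_eq_iff)

lemma Wo_unfold: "i < T \<Longrightarrow> Wo T i g = Do i g + Xo i (Xo (i + 1) (Wo T (i + 3) g))"
proof -
  assume iT: "i < T"
  have fin: "finite {k. i + 3 + 3 * k < T}"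
    by (rule finite_subset[of _ "{..<T}"]) auto
  have e: "{k. i + 3 * k < T} = insert 0 (Suc ` {k. i + 3 + 3 * k < T})"
  proof (intro set_eqI iffI)
    fix k assume "k \<in> {k. i + 3 * k < T}"
    then show "k \<in> insert 0 (Suc ` {k. i + 3 + 3 * k < T})"
      by (cases k) auto
  qed (use iT in auto)
  have "Wo T i g = (\<lambda>S. PX i 0 (Do i g) S + (\<Sum>k\<in>{k. i + 3 + 3 * k < T}. PX i (Suc k) (Do (i + 3 * Suc k) g) S))"
    unfolding Wo_def e using fin by (simp add: sum.reindex)
  also have "\<dots> = Do i g + Xo i (Xo (i + 1) (Wo T (i + 3) g))"
    unfolding Wo_def Xo_sum PX_Suc' by (simp add: algebra_simps fun_eq_iff)
  finally show ?thesis .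
qed

lemma WXD: "l < j \<Longrightarrow> Wo T j (Xo l (g::nat set \<Rightarrow> 'a::field)) = - Xo l (Wo T j g) \<and> Wo T j (Do l g) = - Do l (Wo T j g)"
proof (induction "T - j" arbitrary: j g rule: less_induct)
  case less
  show ?case
  proof (cases "j < T")
    case False
    then show ?thesis by (simp add: Wo_high)
  next
    case True
    have ih: "Wo T (j + 3) (Xo l h) = - Xo l (Wo T (j + 3) h)"
             "Wo T (j + 3) (Do l h) = - Do l (Wo T (j + 3) h)" for h :: "nat set \<Rightarrow> 'a"
      using less.hyps[of "j + 3" h] less.prems True by auto
    have a: "j \<noteq> l" "Suc j \<noteq> l" "l < j" "l < Suc j" "l \<noteq> j" "l \<noteq> Suc j" using less.prems by auto
    show ?thesis using True
      by (simp add: Wo_unfold[OF True] ih DX_swap a XX_swap DD_swap)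
  qed
qed

lemma WX: "l < j \<Longrightarrow> Wo T j (Xo l g) = - Xo l (Wo T j g)"
  using WXD by blast
lemma WD: "l < j \<Longrightarrow> Wo T j (Do l g) = - Do l (Wo T j g)"
  using WXD by blast

lemmas comm_rules = WX WD DX_swap DX_same XX_swap DD_swap

lemma base0: "Wo T i (Wo T i g) = Xo (i + 1) (Wo T (i + 3) g)"
proof (cases "i < T")
  case True
  show ?thesis by (simp add: Wo_unfold[OF True] comm_rules)
qed (simp add: Wo_high)

lemma Wo_if: "Wo T j g = (if j < T then Do j g + Xo j (Xo (j + 1) (Wo T (j + 3) g)) else 0)"
  by (simp add: Wo_unfold Wo_high)

lemma base1: "Wo T i (Wo T (i + 1) g) + Wo T (i + 1) (Wo T i g) = - Xo i (Wo T (i + 3) g)"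
  by (simp add: Wo_if[of T i] Wo_if[of T "Suc i"] Wo_high comm_rules)

lemma base2: "Wo T i (Wo T (i + 2) g) + Wo T (i + 2) (Wo T i g)
   = - Xo i (Xo (i + 1) (Xo (i + 2) (Wo T (i + 5) g)))"
  by (simp add: Wo_if[of T i] Wo_if[of T "Suc (Suc i)"] Wo_if[of T "Suc (Suc (Suc i))"] Wo_high comm_rules numeral_eq_Suc add_Suc add_Suc_right)

lemma step: "i + 3 \<le> j \<Longrightarrow> Wo T i (Wo T j g) + Wo T j (Wo T i g)
   = Xo i (Xo (i + 1) (Wo T (i + 3) (Wo T j g) + Wo T j (Wo T (i + 3) g)))"
  by (simp add: Wo_if[of T i] Wo_high comm_rules)

lemma C0: "Wo T i (Wo T (i + 3 * k) g) + Wo T (i + 3 * k) (Wo T i g)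
  = PX i k (Xo (i + 3 * k + 1) (Wo T (i + 3 * k + 3) g)) + PX i k (Xo (i + 3 * k + 1) (Wo T (i + 3 * k + 3) g))"
proof (induction k arbitrary: i)
  case 0 then show ?case by (simp add: base0)
next
  case (Suc k)
  have j: "i + 3 * Suc k = (i + 3) + 3 * k" by simp
  have "Wo T i (Wo T (i + 3 * Suc k) g) + Wo T (i + 3 * Suc k) (Wo T i g)
    = Xo i (Xo (i + 1) (Wo T (i + 3) (Wo T ((i + 3) + 3 * k) g) + Wo T ((i + 3) + 3 * k) (Wo T (i + 3) g)))"
    unfolding j by (rule step) simp
  also have "\<dots> = Xo i (Xo (i + 1) (PX (i + 3) k (Xo (i + 3 + 3 * k + 1) (Wo T (i + 3 + 3 * k + 3) g)) + PX (i + 3) k (Xo (i + 3 + 3 * k + 1) (Wo T (i + 3 + 3 * k + 3) g))))"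
    by (simp only: Suc.IH)
  also have "\<dots> = PX i (Suc k) (Xo (i + 3 * Suc k + 1) (Wo T (i + 3 * Suc k + 3) g)) + PX i (Suc k) (Xo (i + 3 * Suc k + 1) (Wo T (i + 3 * Suc k + 3) g))"
    unfolding j PX_Suc' Xo_add by (rule refl)
  finally show ?case .
qed

lemma C1: "Wo T i (Wo T (i + 3 * k + 1) g) + Wo T (i + 3 * k + 1) (Wo T i g)
  = - PX i k (Xo (i + 3 * k) (Wo T (i + 3 * k + 3) g))"
proof (induction k arbitrary: i)
  case 0 then show ?case using base1[of T i g] by simp
next
  case (Suc k)
  have j: "i + 3 * Suc k = (i + 3) + 3 * k" by simp
  have "Wo T i (Wo T (i + 3 * Suc k + 1) g) + Wo T (i + 3 * Suc k + 1) (Wo T i g)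
    = Xo i (Xo (i + 1) (Wo T (i + 3) (Wo T ((i + 3) + 3 * k + 1) g) + Wo T ((i + 3) + 3 * k + 1) (Wo T (i + 3) g)))"
    unfolding j by (rule step) simp
  also have "\<dots> = Xo i (Xo (i + 1) (- PX (i + 3) k (Xo (i + 3 + 3 * k) (Wo T (i + 3 + 3 * k + 3) g))))"
    by (simp only: Suc.IH)
  also have "\<dots> = - PX i (Suc k) (Xo (i + 3 * Suc k) (Wo T (i + 3 * Suc k + 3) g))"
    unfolding j PX_Suc' by simp
  finally show ?case .
qed

lemma C2: "Wo T i (Wo T (i + 3 * k + 2) g) + Wo T (i + 3 * k + 2) (Wo T i g)
  = - PX i (Suc k) (Xo (i + 3 * k + 2) (Wo T (i + 3 * k + 5) g))"
proof (induction k arbitrary: i)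
  case 0 then show ?case using base2[of T i g] by simp
next
  case (Suc k)
  have j: "i + 3 * Suc k = (i + 3) + 3 * k" by simp
  have "Wo T i (Wo T (i + 3 * Suc k + 2) g) + Wo T (i + 3 * Suc k + 2) (Wo T i g)
    = Xo i (Xo (i + 1) (Wo T (i + 3) (Wo T ((i + 3) + 3 * k + 2) g) + Wo T ((i + 3) + 3 * k + 2) (Wo T (i + 3) g)))"
    unfolding j by (rule step) simp
  also have "\<dots> = Xo i (Xo (i + 1) (- PX (i + 3) (Suc k) (Xo (i + 3 + 3 * k + 2) (Wo T (i + 3 + 3 * k + 5) g))))"
    by (simp only: Suc.IH)
  also have "\<dots> = - PX i (Suc (Suc k)) (Xo (i + 3 * Suc k + 2) (Wo T (i + 3 * Suc k + 5) g))"
    unfolding j PX_Suc'[of i "Suc k"] by simp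
  finally show ?case .
qed

definition bnd :: "nat \<Rightarrow> (nat set \<Rightarrow> 'a::field) \<Rightarrow> bool" where
  "bnd T h = (\<forall>S. h S \<noteq> 0 \<longrightarrow> S \<subseteq> {..<T})"
definition fin0 :: "(nat set \<Rightarrow> 'a::field) \<Rightarrow> bool" where
  "fin0 h = (\<forall>S. infinite S \<longrightarrow> h S = 0)"

lemma bnd_fin0: "bnd T h \<Longrightarrow> fin0 h"
  unfolding bnd_def fin0_def using finite_subset by blast

lemma fin0_Xo: "fin0 h \<Longrightarrow> fin0 (Xo j h)"
  unfolding fin0_def Xo_def by auto

lemma fin0_Do: "fin0 h \<Longrightarrow> fin0 (Do j h)"
  unfolding fin0_def Do_def by auto

lemma gsign_single: "gsign {j} (S - {j}) = (sg S j :: 'a::field)"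
proof -
  have "{(a, b). a \<in> {j} \<and> b \<in> S - {j} \<and> b < a} = (\<lambda>t. (j, t)) ` {t \<in> S. t < j}"
    by auto
  moreover have "card ((\<lambda>t. (j, t)) ` {t \<in> S. t < j}) = card {t \<in> S. t < j}"
    by (rule card_image) (auto simp: inj_on_def)
  ultimately show ?thesis by (simp add: gsign_def sg_def)
qed

lemma xop_Xo: "fin0 h \<Longrightarrow> xop j h = Xo j h"
proof (rule ext)
  fix S assume h: "fin0 h"
  show "xop j h S = Xo j h S"
  proof (cases "finite S")
    case True
    have "xop j h S = (\<Sum>A\<in>Pow S. if A = {j} then gsign {j} (S - {j}) * h (S - {j}) else 0)"
      unfolding xop_def gmult_def by (rule sum.cong) (auto simp: gen_def)
    also have "\<dots> = (if {j} \<in> Pow S then gsign {j} (S - {j}) * h (S - {j}) else 0)"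
      using True by (subst sum.delta) auto
    also have "\<dots> = Xo j h S" by (simp add: Xo_def gsign_single)
    finally show ?thesis .
  next
    case False
    then have "infinite (Pow S)" by simp
    then have "xop j h S = 0" unfolding xop_def gmult_def by simp
    moreover have "Xo j h S = 0" using h False unfolding fin0_def Xo_def by auto
    ultimately show ?thesis by simp
  qed
qed

lemma pprod_PX: "fin0 h \<Longrightarrow> pprod i k h = PX i k h"
proof (induction k arbitrary: h)
  case 0 then show ?case by simp
next
  case (Suc k)
  have "pprod i (Suc k) h = pprod i k (xop (i + 3 * k) (xop (i + 3 * k + 1) h))" by simp
  also have "\<dots> = pprod i k (Xo (i + 3 * k) (Xo (i + 3 * k + 1) h))"
    using Suc.prems by (simp add: xop_Xo fin0_Xo)
  also have "\<dots> = PX i k (Xo (i + 3 * k) (Xo (i + 3 * k + 1) h))"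
    using Suc.prems by (simp add: Suc.IH fin0_Xo)
  finally show ?case by simp
qed

lemma bnd_Do: "bnd T h \<Longrightarrow> bnd T (Do j h)"
  unfolding bnd_def Do_def by (auto split: if_splits)

lemma bnd_Xo: "j < T \<Longrightarrow> bnd T h \<Longrightarrow> bnd T (Xo j h)"
  unfolding bnd_def Xo_def by (force split: if_splits)

lemma bnd_PX: "i + 3 * k \<le> T \<Longrightarrow> bnd T h \<Longrightarrow> bnd T (PX i k h)"
proof (induction k arbitrary: h)
  case 0 then show ?case by simp
next
  case (Suc k)
  have "bnd T (Xo (i + 3 * k) (Xo (i + 3 * k + 1) h))"
    using Suc.prems by (intro bnd_Xo) auto
  then show ?case using Suc by simp
qed

lemma bnd_sum: "(\<And>k. k \<in> K \<Longrightarrow> bnd T (h k)) \<Longrightarrow> bnd T (\<lambda>S. \<Sum>k\<in>K. h k S)"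
  unfolding bnd_def by (metis (mono_tags, lifting) sum.neutral)

lemma bnd_Wo: "bnd T h \<Longrightarrow> bnd T (Wo T i h)"
  unfolding Wo_def by (intro bnd_sum bnd_PX bnd_Do) auto

lemma vop_Wo: "bnd T h \<Longrightarrow> vop i h = Wo T i h"
proof -
  assume b: "bnd T h"
  have sub: "{k. i + 3 * k \<in> vars h} \<subseteq> {k. i + 3 * k < T}"
    using b unfolding bnd_def vars_def by auto
  have fin: "finite {k. i + 3 * k < T}"
    by (rule finite_subset[of _ "{..<T}"]) auto
  have z: "Do (i + 3 * k) h = 0" if "i + 3 * k \<notin> vars h" for k
    using that unfolding vars_def Do_def by (auto simp: fun_eq_iff)
  have "vop i h = (\<lambda>S. \<Sum>k\<in>{k. i + 3 * k \<in> vars h}. PX i k (Do (i + 3 * k) h) S)"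
    unfolding vop_def dop_Do using bnd_fin0[OF b]
    by (simp add: pprod_PX fin0_Do)
  also have "\<dots> = Wo T i h"
    unfolding Wo_def
    by (rule ext, rule sum.mono_neutral_left[OF fin sub]) (auto simp: z)
  finally show ?thesis .
qed

lemma grass_bnd: "f \<in> grass \<Longrightarrow> \<exists>T. bnd T f"
proof -
  assume "f \<in> grass"
  then have "finite (\<Union>{S. f S \<noteq> 0})" unfolding grass_def by auto
  then obtain T where "\<forall>n\<in>\<Union>{S. f S \<noteq> 0}. n < T"
    using finite_nat_set_iff_bounded by blast
  then have "bnd T f" unfolding bnd_def by auto
  then show ?thesis by blast
qed

theorem lemma4p2:
  fixes i k :: nat and f :: "nat set \<Rightarrow> 'a::field"
  assumes "f \<in> grass"
  shows "(scomm 1 1 (vop i) (vop (i + 3 * k)) f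
           = (\<lambda>S. 2 * (pprod i k \<circ> xop (i + 3 * k + 1) \<circ> vop (i + 3 * k + 3)) f S)) \<and>
         (scomm 1 1 (vop i) (vop (i + 3 * k + 1)) f
           = (\<lambda>S. - (pprod i k \<circ> xop (i + 3 * k) \<circ> vop (i + 3 * k + 3)) f S)) \<and>
         (scomm 1 1 (vop i) (vop (i + 3 * k + 2)) f
           = (\<lambda>S. - (pprod i (Suc k) \<circ> xop (i + 3 * k + 2) \<circ> vop (i + 3 * k + 5)) f S))"
proof -
  obtain T where b: "bnd T f" using grass_bnd assms by blast
  have V: "vop j f = Wo T j f" for j using vop_Wo[OF b] .
  have VV: "vop a (vop j f) = Wo T a (Wo T j f)" for a j
    using V vop_Wo[OF bnd_Wo[OF b]] by simp
  have R: "(pprod i m \<circ> xop a \<circ> vop c) f = PX i m (Xo a (Wo T c f))" for m a c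
    using V by (simp add: xop_Xo pprod_PX fin0_Xo bnd_fin0[OF bnd_Wo[OF b]])
  have sc: "scomm 1 1 (vop a) (vop j) f = (\<lambda>S. Wo T a (Wo T j f) S + Wo T j (Wo T a f) S)" for a j
    by (simp add: scomm_def VV)
  have e0: "Wo T i (Wo T (i + 3 * k) f) S + Wo T (i + 3 * k) (Wo T i f) S
     = 2 * PX i k (Xo (i + 3 * k + 1) (Wo T (i + 3 * k + 3) f)) S" for S
    using fun_cong[OF C0[of T i k f], of S] by simp
  have e1: "Wo T i (Wo T (i + 3 * k + 1) f) S + Wo T (i + 3 * k + 1) (Wo T i f) S
     = - PX i k (Xo (i + 3 * k) (Wo T (i + 3 * k + 3) f)) S" for S
    using fun_cong[OF C1[of T i k f], of S] by simp
  have e2: "Wo T i (Wo T (i + 3 * k + 2) f) S + Wo T (i + 3 * k + 2) (Wo T i f) S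
     = - PX i (Suc k) (Xo (i + 3 * k + 2) (Wo T (i + 3 * k + 5) f)) S" for S
    using fun_cong[OF C2[of T i k f], of S] by simp
  show ?thesis unfolding sc R using e0 e1 e2 by simp
qed

end
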